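(* Let $m$ and $m_1$ be positive integers, $n=mm_1+2$, and let $\phi$ be a homogeneous polynomial on $\mathbb{R}^n$ of degree $m$ satisfying $|\nabla\phi(x)|^2=m^2|x|^{2m-2}$ and $\Delta\phi(x)=0$. Then: (i) $u=\operatorname{arctanh}\big(\phi(x)|x|^{-m}\big)$ is $p$-harmonic with $p=1+m_1$; (ii) $u=\dfrac{\phi(x)}{\sqrt{|x|^{2m}-\phi(x)^2}}$ is $p$-harmonic with $p=1+\tfrac12 m_1$; (iii) $u=\arcsin\big(\phi(x)|x|^{-m}\big)$ is $\infty$-harmonic, i.e. $\nabla u\cdot\nabla|\nabla u|^2=0$. Moreover, (iv) for every positive integer $k$, the function $u(x,y)=\ln\frac{|x|}{|y|}$, $(x,y)\in\mathbb{R}^k\times\mathbb{R}^k$, is $k$-harmonic in $\mathbb{R}^{2k}$.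
   Context: The $p$-Laplacian of a $C^2$ function $u$ is $\Delta_p u:=|\nabla u|^2\Delta u+\tfrac{p-2}{2}\nabla u\cdot\nabla|\nabla u|^2$; $u$ is $p$-harmonic if $\Delta_p u=0$ (on the open set where $u$ is defined and smooth). *)

theory Defs
  imports "HOL-Analysis.Analysis"
begin

text \<open>Partial derivative of a real-valued function on a Euclidean space in the
  direction of a basis vector (meaningful where the function is differentiable).\<close>
definition pderiv_dir :: "('a::euclidean_space \<Rightarrow> real) \<Rightarrow> 'a \<Rightarrow> 'a \<Rightarrow> real" where
  "pderiv_dir f i x = frechet_derivative f (at x) i"

definition grad :: "('a::euclidean_space \<Rightarrow> real) \<Rightarrow> 'a \<Rightarrow> 'a" where
  "grad f x = (\<Sum>i\<in>Basis. pderiv_dir f i x *\<^sub>R i)"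

definition laplacian :: "('a::euclidean_space \<Rightarrow> real) \<Rightarrow> 'a \<Rightarrow> real" where
  "laplacian f x = (\<Sum>i\<in>Basis. pderiv_dir (pderiv_dir f i) i x)"

definition C2_on :: "'a::euclidean_space set \<Rightarrow> ('a \<Rightarrow> real) \<Rightarrow> bool" where
  "C2_on S f \<longleftrightarrow> (\<forall>x\<in>S. f differentiable (at x)) \<and>
     (\<forall>i\<in>Basis. \<forall>x\<in>S. pderiv_dir f i differentiable (at x)) \<and>
     (\<forall>i\<in>Basis. \<forall>j\<in>Basis. continuous_on S (pderiv_dir (pderiv_dir f i) j))"

definition p_laplacian :: "real \<Rightarrow> ('a::euclidean_space \<Rightarrow> real) \<Rightarrow> 'a \<Rightarrow> real" where
  "p_laplacian p u x = (norm (grad u x))\<^sup>2 * laplacian u x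
      + (p - 2) / 2 * (grad u x \<bullet> grad (\<lambda>y. (norm (grad u y))\<^sup>2) x)"

definition p_harmonic_on :: "real \<Rightarrow> 'a::euclidean_space set \<Rightarrow> ('a \<Rightarrow> real) \<Rightarrow> bool" where
  "p_harmonic_on p S u \<longleftrightarrow> open S \<and> C2_on S u \<and> (\<forall>x\<in>S. p_laplacian p u x = 0)"

definition inf_harmonic_on :: "'a::euclidean_space set \<Rightarrow> ('a \<Rightarrow> real) \<Rightarrow> bool" where
  "inf_harmonic_on S u \<longleftrightarrow> open S \<and> C2_on S u \<and>
     (\<forall>x\<in>S. grad u x \<bullet> grad (\<lambda>y. (norm (grad u y))\<^sup>2) x = 0)"

definition homogeneous_poly :: "nat \<Rightarrow> (real^'n \<Rightarrow> real) \<Rightarrow> bool" where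
  "homogeneous_poly m f \<longleftrightarrow> (\<exists>c :: ('n \<Rightarrow> nat) \<Rightarrow> real.
      finite {\<alpha>. c \<alpha> \<noteq> 0} \<and> (\<forall>\<alpha>. c \<alpha> \<noteq> 0 \<longrightarrow> (\<Sum>i\<in>UNIV. \<alpha> i) = m) \<and>
      f = (\<lambda>x. \<Sum>\<alpha>\<in>{\<alpha>. c \<alpha> \<noteq> 0}. c \<alpha> * (\<Prod>i\<in>UNIV. (x $ i) ^ (\<alpha> i))))"

end

theory Submission
  imports Defs
begin


definition C2d :: "'a::euclidean_space set \<Rightarrow> ('a\<Rightarrow>real) \<Rightarrow> ('a\<Rightarrow>'a) \<Rightarrow> ('a\<Rightarrow>real) \<Rightarrow> bool" where
"C2d S f G T \<longleftrightarrow> open S \<and> (\<exists>H. (\<forall>x\<in>S. (f has_derivative (\<lambda>h. G x \<bullet> h)) (at x)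
   \<and> (G has_derivative H x) (at x) \<and> T x = (\<Sum>i\<in>Basis. H x i \<bullet> i))
   \<and> (\<forall>i\<in>Basis. \<forall>j\<in>Basis. continuous_on S (\<lambda>x. H x j \<bullet> i)))"

definition C1d :: "'a::euclidean_space set \<Rightarrow> ('a\<Rightarrow>real) \<Rightarrow> ('a\<Rightarrow>'a) \<Rightarrow> bool" where
"C1d S f G \<longleftrightarrow> open S \<and> (\<forall>x\<in>S. (f has_derivative (\<lambda>h. G x \<bullet> h)) (at x))"

lemma pderiv_dir_eq:
  assumes "(f has_derivative (\<lambda>h. G \<bullet> h)) (at x)"
  shows "pderiv_dir f i x = G \<bullet> i"
  using frechet_derivative_at[OF assms] unfolding pderiv_dir_def by metis

lemma grad_eq:
  assumes "(f has_derivative (\<lambda>h. G \<bullet> h)) (at x)"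
  shows "grad f x = G"
  unfolding grad_def using pderiv_dir_eq[OF assms]
  by (simp add: euclidean_representation)

lemma C1d_grad:
  assumes "C1d S f G" "x \<in> S" "\<forall>y\<in>S. g y = f y"
  shows "grad g x = G x"
proof -
  have "(g has_derivative (\<lambda>h. G x \<bullet> h)) (at x)"
    using assms unfolding C1d_def
    by (metis has_derivative_transform_within_open)
  thus ?thesis by (rule grad_eq)
qed

lemma C2d_C1d: "C2d S f G T \<Longrightarrow> C1d S f G"
  unfolding C2d_def C1d_def by blast

lemma C2d_props:
  assumes "C2d S f G T"
  shows "C2_on S f" "\<And>x. x \<in> S \<Longrightarrow> grad f x = G x" "\<And>x. x \<in> S \<Longrightarrow> laplacian f x = T x"
proof -
  from assms obtain H where os: "open S" and
    H: "\<And>x. x\<in>S \<Longrightarrow> (f has_derivative (\<lambda>h. G x \<bullet> h)) (at x)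
   \<and> (G has_derivative H x) (at x) \<and> T x = (\<Sum>i\<in>Basis. H x i \<bullet> i)"
    and c: "\<forall>i\<in>Basis. \<forall>j\<in>Basis. continuous_on S (\<lambda>x. H x j \<bullet> i)"
    unfolding C2d_def by blast
  have pd1: "pderiv_dir f i y = G y \<bullet> i" if "y \<in> S" for i y
    using H[OF that] pderiv_dir_eq by blast
  have d2: "(pderiv_dir f i has_derivative (\<lambda>h. H x h \<bullet> i)) (at x)" if "x \<in> S" for i x
  proof -
    have "((\<lambda>y. G y \<bullet> i) has_derivative (\<lambda>h. H x h \<bullet> i)) (at x)"
      using H[OF that] by (auto intro!: derivative_eq_intros)
    thus ?thesis by (rule has_derivative_transform_within_open[OF _ os that]) (simp add: pd1)
  qed
  have pd2: "pderiv_dir (pderiv_dir f i) j x = H x j \<bullet> i" if "x \<in> S" for i j x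
  proof -
    have "(pderiv_dir f i has_derivative (\<lambda>h. (\<lambda>h. H x h \<bullet> i) h)) (at x)" using d2[OF that] .
    then have "frechet_derivative (pderiv_dir f i) (at x) = (\<lambda>h. H x h \<bullet> i)"
      by (metis frechet_derivative_at)
    thus ?thesis unfolding pderiv_dir_def by simp
  qed
  show "C2_on S f" unfolding C2_on_def
  proof (intro conjI ballI)
    fix x assume "x \<in> S" thus "f differentiable at x" using H differentiableI by blast
  next
    fix i x :: 'a assume "x \<in> S" thus "pderiv_dir f i differentiable at x" using d2 differentiableI by blast
  next
    fix i j :: 'a assume ij: "i \<in> Basis" "j \<in> Basis"
    show "continuous_on S (pderiv_dir (pderiv_dir f i) j)"
      using c ij by (metis (mono_tags, lifting) continuous_on_cong pd2)
  qed
  show "grad f x = G x" if "x \<in> S" for x using H[OF that] grad_eq by blast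
  show "laplacian f x = T x" if "x \<in> S" for x
    using H[OF that] pd2[OF that] unfolding laplacian_def by simp
qed

lemma C2d_plap:
  assumes "C2d S f G T" "C1d S N GN" "\<forall>y\<in>S. N y = (norm (G y))\<^sup>2" "x \<in> S"
  shows "p_laplacian p f x = (norm (G x))\<^sup>2 * T x + (p - 2) / 2 * (G x \<bullet> GN x)"
    "grad f x \<bullet> grad (\<lambda>y. (norm (grad f y))\<^sup>2) x = G x \<bullet> GN x"
proof -
  have g: "grad f y = G y" if "y \<in> S" for y using C2d_props(2)[OF assms(1) that] .
  have "grad (\<lambda>y. (norm (grad f y))\<^sup>2) x = GN x"
    using C1d_grad[OF assms(2) assms(4)] assms(3) g by simp
  thus "p_laplacian p f x = (norm (G x))\<^sup>2 * T x + (p - 2) / 2 * (G x \<bullet> GN x)"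
    "grad f x \<bullet> grad (\<lambda>y. (norm (grad f y))\<^sup>2) x = G x \<bullet> GN x"
    unfolding p_laplacian_def using g assms(4) C2d_props(3)[OF assms(1) assms(4)] by auto
qed

lemma contI_der: "(\<And>x. x \<in> S \<Longrightarrow> (f has_derivative D x) (at x)) \<Longrightarrow> continuous_on S f"
  by (rule has_derivative_continuous_on) (auto intro: has_derivative_at_withinI)

lemma C2d_cont: assumes "C2d S f G T" shows "continuous_on S f" "\<And>i. continuous_on S (\<lambda>x. G x \<bullet> i)" "continuous_on S G"
proof -
  from assms obtain H where 
    H: "\<And>x. x\<in>S \<Longrightarrow> (f has_derivative (\<lambda>h. G x \<bullet> h)) (at x) \<and> (G has_derivative H x) (at x)"
    unfolding C2d_def by blast
  show "continuous_on S f" using contI_der[of S f "\<lambda>x h. G x \<bullet> h"] H by blast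
  show "continuous_on S G" using contI_der[of S G H] H by blast
  thus "continuous_on S (\<lambda>x. G x \<bullet> i)" for i by (intro continuous_intros)
qed

lemma C2d_eq: assumes "C2d S f G T" "\<And>x. x \<in> S \<Longrightarrow> f x = f' x" "\<And>x. x \<in> S \<Longrightarrow> G x = G' x"
  "\<And>x. x \<in> S \<Longrightarrow> T x = T' x"
  shows "C2d S f' G' T'"
proof -
  from assms(1) obtain H where os: "open S" and
    H: "\<And>x. x\<in>S \<Longrightarrow> (f has_derivative (\<lambda>h. G x \<bullet> h)) (at x)
   \<and> (G has_derivative H x) (at x) \<and> T x = (\<Sum>i\<in>Basis. H x i \<bullet> i)"
    and c: "\<forall>i\<in>Basis. \<forall>j\<in>Basis. continuous_on S (\<lambda>x. H x j \<bullet> i)"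
    unfolding C2d_def by blast
  have "(f' has_derivative (\<lambda>h. G' x \<bullet> h)) (at x) \<and> (G' has_derivative H x) (at x) \<and> T' x = (\<Sum>i\<in>Basis. H x i \<bullet> i)"
    if "x \<in> S" for x
  proof (intro conjI)
    show "(f' has_derivative (\<lambda>h. G' x \<bullet> h)) (at x)"
      using has_derivative_transform_within_open[OF conjunct1[OF H[OF that]] os that assms(2)] assms(3)[OF that] by simp
    show "(G' has_derivative H x) (at x)"
      using has_derivative_transform_within_open[OF conjunct1[OF conjunct2[OF H[OF that]]] os that assms(3)] by simp
    show "T' x = (\<Sum>i\<in>Basis. H x i \<bullet> i)" using H[OF that] assms(4)[OF that] by simp
  qed
  thus ?thesis using os c unfolding C2d_def by blast
qed

lemma C1d_eq: assumes "C1d S f G" "\<And>x. x \<in> S \<Longrightarrow> f x = f' x" "\<And>x. x \<in> S \<Longrightarrow> G x = G' x"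
  shows "C1d S f' G'"
  unfolding C1d_def
proof (intro conjI ballI)
  show os: "open S" using assms unfolding C1d_def by blast
  fix x assume x: "x \<in> S"
  have "(f has_derivative (\<lambda>h. G x \<bullet> h)) (at x)" using assms(1) x unfolding C1d_def by blast
  from has_derivative_transform_within_open[OF this os x assms(2)]
  show "(f' has_derivative (\<lambda>h. G' x \<bullet> h)) (at x)" using assms(3)[OF x] by simp
qed

lemma C2d_mono: "C2d S f G T \<Longrightarrow> open S' \<Longrightarrow> S' \<subseteq> S \<Longrightarrow> C2d S' f G T"
proof -
  assume a: "C2d S f G T" "open S'" "S' \<subseteq> S"
  from a(1) obtain H where
    H: "\<And>x. x\<in>S \<Longrightarrow> (f has_derivative (\<lambda>h. G x \<bullet> h)) (at x)
   \<and> (G has_derivative H x) (at x) \<and> T x = (\<Sum>i\<in>Basis. H x i \<bullet> i)"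
    and c: "\<forall>i\<in>Basis. \<forall>j\<in>Basis. continuous_on S (\<lambda>x. H x j \<bullet> i)"
    unfolding C2d_def by blast
  have c': "\<forall>i\<in>Basis. \<forall>j\<in>Basis. continuous_on S' (\<lambda>x. H x j \<bullet> i)"
    using c a(3) continuous_on_subset by blast
  show ?thesis unfolding C2d_def using a(2,3) H c' by blast
qed

lemma C1d_mono: "C1d S f G \<Longrightarrow> open S' \<Longrightarrow> S' \<subseteq> S \<Longrightarrow> C1d S' f G"
  unfolding C1d_def by blast

lemma C2d_const: fixes S :: "'a::euclidean_space set" assumes "open S" shows "C2d S (\<lambda>x. c) (\<lambda>x. 0) (\<lambda>x. 0)"
proof -
  have e: "(\<bullet>) (0::'a) = (\<lambda>h. 0)" by (simp add: fun_eq_iff)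
  show ?thesis unfolding C2d_def by (intro conjI assms exI[of _ "\<lambda>x h. 0"]) (auto simp: e)
qed

lemma C2d_add: assumes "C2d S f G1 T1" "C2d S g G2 T2"
  shows "C2d S (\<lambda>x. f x + g x) (\<lambda>x. G1 x + G2 x) (\<lambda>x. T1 x + T2 x)"
proof -
  from assms(1) obtain H1 where os: "open S" and
    H1: "\<And>x. x\<in>S \<Longrightarrow> (f has_derivative (\<lambda>h. G1 x \<bullet> h)) (at x)
   \<and> (G1 has_derivative H1 x) (at x) \<and> T1 x = (\<Sum>i\<in>Basis. H1 x i \<bullet> i)"
    and c1: "\<forall>i\<in>Basis. \<forall>j\<in>Basis. continuous_on S (\<lambda>x. H1 x j \<bullet> i)"
    unfolding C2d_def by blast
  from assms(2) obtain H2 where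
    H2: "\<And>x. x\<in>S \<Longrightarrow> (g has_derivative (\<lambda>h. G2 x \<bullet> h)) (at x)
   \<and> (G2 has_derivative H2 x) (at x) \<and> T2 x = (\<Sum>i\<in>Basis. H2 x i \<bullet> i)"
    and c2: "\<forall>i\<in>Basis. \<forall>j\<in>Basis. continuous_on S (\<lambda>x. H2 x j \<bullet> i)"
    unfolding C2d_def by blast
  show ?thesis unfolding C2d_def
  proof (intro conjI os exI[of _ "\<lambda>x h. H1 x h + H2 x h"] ballI)
    fix x assume x: "x \<in> S"
    show "((\<lambda>x. f x + g x) has_derivative (\<lambda>h. (G1 x + G2 x) \<bullet> h)) (at x)"
      using H1[OF x] H2[OF x] by (auto intro!: derivative_eq_intros simp: inner_add_left)
    show "((\<lambda>x. G1 x + G2 x) has_derivative (\<lambda>h. H1 x h + H2 x h)) (at x)"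
      using H1[OF x] H2[OF x] by (auto intro!: derivative_eq_intros)
    show "T1 x + T2 x = (\<Sum>i\<in>Basis. (H1 x i + H2 x i) \<bullet> i)"
      using H1[OF x] H2[OF x] by (simp add: inner_add_left sum.distrib)
  next
    fix i j :: 'a assume "i \<in> Basis" "j \<in> Basis"
    thus "continuous_on S (\<lambda>x. (H1 x j + H2 x j) \<bullet> i)"
      using c1 c2 by (simp add: inner_add_left continuous_on_add)
  qed
qed

lemma C2d_mult: assumes "C2d S f G1 T1" "C2d S g G2 T2"
  shows "C2d S (\<lambda>x. f x * g x) (\<lambda>x. f x *\<^sub>R G2 x + g x *\<^sub>R G1 x)
     (\<lambda>x. f x * T2 x + g x * T1 x + 2 * (G1 x \<bullet> G2 x))"
proof -
  from assms(1) obtain H1 where os: "open S" and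
    H1: "\<And>x. x\<in>S \<Longrightarrow> (f has_derivative (\<lambda>h. G1 x \<bullet> h)) (at x)
   \<and> (G1 has_derivative H1 x) (at x) \<and> T1 x = (\<Sum>i\<in>Basis. H1 x i \<bullet> i)"
    and c1: "\<forall>i\<in>Basis. \<forall>j\<in>Basis. continuous_on S (\<lambda>x. H1 x j \<bullet> i)"
    unfolding C2d_def by blast
  from assms(2) obtain H2 where
    H2: "\<And>x. x\<in>S \<Longrightarrow> (g has_derivative (\<lambda>h. G2 x \<bullet> h)) (at x)
   \<and> (G2 has_derivative H2 x) (at x) \<and> T2 x = (\<Sum>i\<in>Basis. H2 x i \<bullet> i)"
    and c2: "\<forall>i\<in>Basis. \<forall>j\<in>Basis. continuous_on S (\<lambda>x. H2 x j \<bullet> i)"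
    unfolding C2d_def by blast
  note cf = C2d_cont[OF assms(1)] and cg = C2d_cont[OF assms(2)]
  show ?thesis unfolding C2d_def
  proof (intro conjI os exI[of _ "\<lambda>x h. (G1 x \<bullet> h) *\<^sub>R G2 x + f x *\<^sub>R H2 x h + (G2 x \<bullet> h) *\<^sub>R G1 x + g x *\<^sub>R H1 x h"] ballI)
    fix x assume x: "x \<in> S"
    show "((\<lambda>x. f x * g x) has_derivative (\<lambda>h. (f x *\<^sub>R G2 x + g x *\<^sub>R G1 x) \<bullet> h)) (at x)"
      using H1[OF x] H2[OF x] by (auto intro!: derivative_eq_intros simp: inner_add_left algebra_simps)
    show "((\<lambda>x. f x *\<^sub>R G2 x + g x *\<^sub>R G1 x) has_derivative (\<lambda>h. (G1 x \<bullet> h) *\<^sub>R G2 x + f x *\<^sub>R H2 x h + (G2 x \<bullet> h) *\<^sub>R G1 x + g x *\<^sub>R H1 x h)) (at x)"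
      using H1[OF x] H2[OF x] by (auto intro!: derivative_eq_intros simp: algebra_simps)
    show "f x * T2 x + g x * T1 x + 2 * (G1 x \<bullet> G2 x) = (\<Sum>i\<in>Basis. ((G1 x \<bullet> i) *\<^sub>R G2 x + f x *\<^sub>R H2 x i + (G2 x \<bullet> i) *\<^sub>R G1 x + g x *\<^sub>R H1 x i) \<bullet> i)"
      using H1[OF x] H2[OF x] euclidean_inner[of "G1 x" "G2 x"]
      by (simp add: inner_add_left sum.distrib sum_distrib_left algebra_simps)
  next
    fix i j :: 'a assume "i \<in> Basis" "j \<in> Basis"
    hence cH: "continuous_on S (\<lambda>x. H1 x j \<bullet> i)" "continuous_on S (\<lambda>x. H2 x j \<bullet> i)" using c1 c2 by blast+
    show "continuous_on S (\<lambda>x. ((G1 x \<bullet> j) *\<^sub>R G2 x + f x *\<^sub>R H2 x j + (G2 x \<bullet> j) *\<^sub>R G1 x + g x *\<^sub>R H1 x j) \<bullet> i)"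
      unfolding inner_add_left inner_scaleR_left
      by (rule continuous_on_add continuous_on_add continuous_on_add continuous_on_mult[OF cf(2) cg(2)]
           continuous_on_mult[OF cf(1) cH(2)] continuous_on_mult[OF cg(2) cf(2)] continuous_on_mult[OF cg(1) cH(1)])+
  qed
qed

lemma C2d_compose: assumes "C2d S g G T" "open U" "\<And>x. x \<in> S \<Longrightarrow> g x \<in> U"
  "\<And>s. s \<in> U \<Longrightarrow> (f has_real_derivative f1 s) (at s)"
  "\<And>s. s \<in> U \<Longrightarrow> (f1 has_real_derivative f2 s) (at s)"
  "continuous_on U f2"
  shows "C2d S (\<lambda>x. f (g x)) (\<lambda>x. f1 (g x) *\<^sub>R G x) (\<lambda>x. f2 (g x) * (G x \<bullet> G x) + f1 (g x) * T x)"
proof -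
  from assms(1) obtain H where os: "open S" and
    H: "\<And>x. x\<in>S \<Longrightarrow> (g has_derivative (\<lambda>h. G x \<bullet> h)) (at x)
   \<and> (G has_derivative H x) (at x) \<and> T x = (\<Sum>i\<in>Basis. H x i \<bullet> i)"
    and c: "\<forall>i\<in>Basis. \<forall>j\<in>Basis. continuous_on S (\<lambda>x. H x j \<bullet> i)"
    unfolding C2d_def by blast
  note cg = C2d_cont[OF assms(1)]
  have cf1: "continuous_on U f1" using assms(5)
    by (metis DERIV_isCont continuous_at_imp_continuous_on)
  have cf1g: "continuous_on S (\<lambda>x. f1 (g x))"
    using continuous_on_compose2[OF cf1 cg(1)] assms(3) by blast
  have cf2g: "continuous_on S (\<lambda>x. f2 (g x))"
    using continuous_on_compose2[OF assms(6) cg(1)] assms(3) by blast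
  show ?thesis unfolding C2d_def
  proof (intro conjI os exI[of _ "\<lambda>x h. (f2 (g x) * (G x \<bullet> h)) *\<^sub>R G x + f1 (g x) *\<^sub>R H x h"] ballI)
    fix x assume x: "x \<in> S"
    have d1: "((\<lambda>x. f (g x)) has_derivative (\<lambda>h. (G x \<bullet> h) * f1 (g x))) (at x)"
      using DERIV_compose_FDERIV[where f=f and g=g and x=x and s=UNIV, OF assms(4)[OF assms(3)[OF x]]] H[OF x] by blast
    show "((\<lambda>x. f (g x)) has_derivative (\<lambda>h. (f1 (g x) *\<^sub>R G x) \<bullet> h)) (at x)"
      using d1 by (rule has_derivative_eq_rhs) (auto simp: fun_eq_iff)
    have d2: "((\<lambda>x. f1 (g x)) has_derivative (\<lambda>h. (G x \<bullet> h) * f2 (g x))) (at x)"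
      using DERIV_compose_FDERIV[where f=f1 and g=g and x=x and s=UNIV, OF assms(5)[OF assms(3)[OF x]]] H[OF x] by blast
    show "((\<lambda>x. f1 (g x) *\<^sub>R G x) has_derivative (\<lambda>h. (f2 (g x) * (G x \<bullet> h)) *\<^sub>R G x + f1 (g x) *\<^sub>R H x h)) (at x)"
      using has_derivative_scaleR[OF d2 conjunct1[OF conjunct2[OF H[OF x]]]]
      by (rule has_derivative_eq_rhs) (auto simp: fun_eq_iff algebra_simps)
    show "f2 (g x) * (G x \<bullet> G x) + f1 (g x) * T x = (\<Sum>i\<in>Basis. ((f2 (g x) * (G x \<bullet> i)) *\<^sub>R G x + f1 (g x) *\<^sub>R H x i) \<bullet> i)"
      using H[OF x] euclidean_inner[of "G x" "G x"]
      by (simp add: inner_add_left sum.distrib sum_distrib_left algebra_simps)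
  next
    fix i j :: 'a assume "i \<in> Basis" "j \<in> Basis"
    hence cH: "continuous_on S (\<lambda>x. H x j \<bullet> i)" using c by blast
    show "continuous_on S (\<lambda>x. ((f2 (g x) * (G x \<bullet> j)) *\<^sub>R G x + f1 (g x) *\<^sub>R H x j) \<bullet> i)"
      unfolding inner_add_left inner_scaleR_left
      by (rule continuous_on_add continuous_on_mult[OF continuous_on_mult[OF cf2g cg(2)] cg(2)]
           continuous_on_mult[OF cf1g cH])+
  qed
qed

lemma C1d_mult: assumes "C1d S f G1" "C1d S g G2"
  shows "C1d S (\<lambda>x. f x * g x) (\<lambda>x. f x *\<^sub>R G2 x + g x *\<^sub>R G1 x)"
  using assms unfolding C1d_def
  by (auto intro!: derivative_eq_intros simp: inner_add_left algebra_simps)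

lemma C1d_add: assumes "C1d S f G1" "C1d S g G2"
  shows "C1d S (\<lambda>x. f x + g x) (\<lambda>x. G1 x + G2 x)"
  using assms unfolding C1d_def
  by (auto intro!: derivative_eq_intros simp: inner_add_left algebra_simps)

lemma C1d_compose: assumes "C1d S g G" "\<And>x. x \<in> S \<Longrightarrow> g x \<in> U"
  "\<And>s. s \<in> U \<Longrightarrow> (f has_real_derivative f1 s) (at s)"
  shows "C1d S (\<lambda>x. f (g x)) (\<lambda>x. f1 (g x) *\<^sub>R G x)"
  unfolding C1d_def
proof (intro conjI ballI)
  show "open S" using assms(1) unfolding C1d_def by blast
  fix x assume x: "x \<in> S"
  have "((\<lambda>x. f (g x)) has_derivative (\<lambda>h. (G x \<bullet> h) * f1 (g x))) (at x)"
    using DERIV_compose_FDERIV[where f=f and g=g and x=x and s=UNIV, OF assms(3)[OF assms(2)[OF x]]] assms(1) x unfolding C1d_def by blast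
  thus "((\<lambda>x. f (g x)) has_derivative (\<lambda>h. (f1 (g x) *\<^sub>R G x) \<bullet> h)) (at x)"
    by (rule has_derivative_eq_rhs) (auto simp: fun_eq_iff)
qed

lemma C2d_inner_self: "C2d UNIV (\<lambda>x::'a::euclidean_space. x \<bullet> x) (\<lambda>x. 2 *\<^sub>R x) (\<lambda>x. 2 * real DIM('a))"
  unfolding C2d_def
proof (intro conjI exI[of _ "\<lambda>x h. 2 *\<^sub>R h"] ballI)
  fix x :: 'a
  show "((\<lambda>x. x \<bullet> x) has_derivative (\<lambda>h. (2 *\<^sub>R x) \<bullet> h)) (at x)"
    by (auto intro!: derivative_eq_intros simp: inner_commute)
  show "((\<lambda>x. 2 *\<^sub>R x) has_derivative (\<lambda>h. 2 *\<^sub>R h)) (at x)"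
    by (auto intro!: derivative_eq_intros)
  show "2 * real DIM('a) = (\<Sum>i\<in>(Basis::'a set). 2 *\<^sub>R i \<bullet> i)" by simp
qed auto



definition C2 :: "'a::euclidean_space set \<Rightarrow> ('a\<Rightarrow>real) \<Rightarrow> bool" where
  "C2 S f \<longleftrightarrow> (\<exists>G T. C2d S f G T)"

lemma C2_const: "open S \<Longrightarrow> C2 S (\<lambda>x. c)"
  unfolding C2_def using C2d_const by blast

lemma C2_mult: "C2 S f \<Longrightarrow> C2 S g \<Longrightarrow> C2 S (\<lambda>x. f x * g x)"
  unfolding C2_def using C2d_mult by blast

lemma C2_add: "C2 S f \<Longrightarrow> C2 S g \<Longrightarrow> C2 S (\<lambda>x. f x + g x)"
  unfolding C2_def using C2d_add by blast

lemma C2_open: "C2 S f \<Longrightarrow> open S"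
  unfolding C2_def C2d_def by blast

lemma C2_sum: "finite A \<Longrightarrow> open S \<Longrightarrow> (\<And>a. a \<in> A \<Longrightarrow> C2 S (f a)) \<Longrightarrow> C2 S (\<lambda>x. \<Sum>a\<in>A. f a x)"
  by (induction A rule: finite_induct) (auto intro!: C2_add C2_const)

lemma C2_prod: "finite A \<Longrightarrow> open S \<Longrightarrow> (\<And>a. a \<in> A \<Longrightarrow> C2 S (f a)) \<Longrightarrow> C2 S (\<lambda>x. \<Prod>a\<in>A. f a x)"
  by (induction A rule: finite_induct) (auto intro!: C2_mult C2_const)

lemma C2_power: "C2 S f \<Longrightarrow> C2 S (\<lambda>x. f x ^ k)"
  by (induction k) (auto intro!: C2_mult C2_const dest: C2_open)

lemma C2d_coord: "C2d UNIV (\<lambda>x::real^'n. x $ i) (\<lambda>x. axis i 1) (\<lambda>x. 0)"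
  unfolding C2d_def
proof (intro conjI exI[of _ "\<lambda>x h. 0"] ballI)
  fix x :: "real^'n"
  have e: "(\<bullet>) (axis i (1::real)) = (\<lambda>h::real^'n. h $ i)" by (simp add: fun_eq_iff inner_axis')
  show "((\<lambda>x. x $ i) has_derivative (\<lambda>h. axis i 1 \<bullet> h)) (at x)"
    unfolding e by (rule bounded_linear_imp_has_derivative) (rule bounded_linear_vec_nth)
  show "((\<lambda>x. axis i (1::real)) has_derivative (\<lambda>h. 0)) (at x)" by (rule has_derivative_const)
qed auto

lemma homog_C2: assumes "homogeneous_poly m \<phi>" shows "C2 UNIV \<phi>"
proof -
  from assms obtain c where c: "finite {\<alpha>. c \<alpha> \<noteq> 0}"
    and f: "\<phi> = (\<lambda>x. \<Sum>\<alpha>\<in>{\<alpha>. c \<alpha> \<noteq> 0}. c \<alpha> * (\<Prod>i\<in>UNIV. (x $ i) ^ (\<alpha> i)))"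
    unfolding homogeneous_poly_def by blast
  have "C2 UNIV (\<lambda>x::real^'a. x $ i)" for i unfolding C2_def using C2d_coord by blast
  hence "C2 UNIV (\<lambda>x::real^'a. \<Sum>\<alpha>\<in>{\<alpha>. c \<alpha> \<noteq> 0}. c \<alpha> * (\<Prod>i\<in>UNIV. (x $ i) ^ (\<alpha> i)))"
    by (intro C2_sum c C2_mult C2_const C2_prod C2_power) auto
  thus ?thesis using f by simp
qed

lemma homog_scale: assumes "homogeneous_poly m \<phi>" shows "\<phi> (s *\<^sub>R x) = s ^ m * \<phi> x"
proof -
  from assms obtain c where c: "finite {\<alpha>. c \<alpha> \<noteq> 0}" and m: "\<forall>\<alpha>. c \<alpha> \<noteq> 0 \<longrightarrow> (\<Sum>i\<in>UNIV. \<alpha> i) = m"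
    and f: "\<phi> = (\<lambda>x. \<Sum>\<alpha>\<in>{\<alpha>. c \<alpha> \<noteq> 0}. c \<alpha> * (\<Prod>i\<in>UNIV. (x $ i) ^ (\<alpha> i)))"
    unfolding homogeneous_poly_def by blast
  have "c \<alpha> * (\<Prod>i\<in>UNIV. ((s *\<^sub>R x) $ i) ^ (\<alpha> i)) = s ^ m * (c \<alpha> * (\<Prod>i\<in>UNIV. (x $ i) ^ (\<alpha> i)))"
    if "\<alpha> \<in> {\<alpha>. c \<alpha> \<noteq> 0}" for \<alpha>
  proof -
    have "(\<Prod>i\<in>UNIV. ((s *\<^sub>R x) $ i) ^ (\<alpha> i)) = (\<Prod>i\<in>UNIV. s ^ \<alpha> i) * (\<Prod>i\<in>UNIV. (x $ i) ^ (\<alpha> i))"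
      by (simp add: power_mult_distrib prod.distrib)
    also have "(\<Prod>i\<in>UNIV. s ^ \<alpha> i) = s ^ m" using m that by (simp add: power_sum[symmetric])
    finally show ?thesis by simp
  qed
  note h = this
  show ?thesis unfolding f sum_distrib_left by (rule sum.cong[OF refl]) (rule h)
qed

lemma euler: assumes "homogeneous_poly m \<phi>" "(\<phi> has_derivative (\<lambda>h. P \<bullet> h)) (at x)"
  shows "P \<bullet> x = real m * \<phi> x"
proof -
  have d1: "((\<lambda>s::real. s *\<^sub>R x) has_derivative (\<lambda>h. h *\<^sub>R x)) (at 1)"
    by (auto intro!: derivative_eq_intros)
  have "((\<lambda>s. \<phi> (s *\<^sub>R x)) has_derivative (\<lambda>h. P \<bullet> (h *\<^sub>R x))) (at 1)"
    by (rule has_derivative_compose[OF d1]) (simp add: assms(2))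
  hence D1: "((\<lambda>s. \<phi> (s *\<^sub>R x)) has_real_derivative (P \<bullet> x)) (at 1)"
    by (rule has_derivative_imp_has_field_derivative) (simp add: mult.commute)
  have D2: "((\<lambda>s. s ^ m * \<phi> x) has_real_derivative (real m * \<phi> x)) (at 1)"
    by (auto intro!: derivative_eq_intros)
  have "(\<lambda>s. \<phi> (s *\<^sub>R x)) = (\<lambda>s. s ^ m * \<phi> x)" using homog_scale[OF assms(1)] by auto
  thus ?thesis using D1 D2 DERIV_unique by metis
qed



lemma powr_m1: "(r::real) > 0 \<Longrightarrow> r powr (a - 1) = r powr (a - 2) * r"
  using powr_add[of r "a - 2" 1] by simp

lemma C2d_norm: "C2d (-{0}) (\<lambda>x::'a::euclidean_space. norm x) (\<lambda>x. (1 / norm x) *\<^sub>R x)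
   (\<lambda>x. (real DIM('a) - 1) / norm x)"
proof -
  have q: "C2d (-{0}) (\<lambda>x::'a. x \<bullet> x) (\<lambda>x. 2 *\<^sub>R x) (\<lambda>x. 2 * real DIM('a))"
    by (rule C2d_mono[OF C2d_inner_self]) auto
  have d1: "(sqrt has_real_derivative 1 / (2 * sqrt s)) (at s)" if "s \<in> {0<..}" for s
    using DERIV_real_sqrt[of s] that by (simp add: field_simps)
  have d2: "((\<lambda>s. 1 / (2 * sqrt s)) has_real_derivative - 1 / (4 * s * sqrt s)) (at s)" if "s \<in> {0<..}" for s
    using that by (auto intro!: derivative_eq_intros simp: field_simps power2_eq_square)
  have c: "continuous_on {0<..} (\<lambda>s::real. - 1 / (4 * s * sqrt s))"
    by (intro continuous_intros) auto
  have "C2d (-{0}) (\<lambda>x::'a. sqrt (x \<bullet> x)) (\<lambda>x. (1 / (2 * sqrt (x \<bullet> x))) *\<^sub>R (2 *\<^sub>R x))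
     (\<lambda>x. - 1 / (4 * (x \<bullet> x) * sqrt (x \<bullet> x)) * ((2 *\<^sub>R x) \<bullet> (2 *\<^sub>R x)) + 1 / (2 * sqrt (x \<bullet> x)) * (2 * real DIM('a)))"
    by (rule C2d_compose[OF q open_greaterThan _ d1 d2 c]) auto
  thus ?thesis
  proof (rule C2d_eq)
    fix x :: 'a assume "x \<in> -{0}"
    hence n: "norm x > 0" by simp
    have e: "sqrt (x \<bullet> x) = norm x" "x \<bullet> x = (norm x)^2" by (simp_all add: norm_eq_sqrt_inner power2_norm_eq_inner)
    show "sqrt (x \<bullet> x) = norm x" by (rule e(1))
    show "(1 / (2 * sqrt (x \<bullet> x))) *\<^sub>R (2 *\<^sub>R x) = (1 / norm x) *\<^sub>R x" using n by (simp add: e)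
    show "- 1 / (4 * (x \<bullet> x) * sqrt (x \<bullet> x)) * ((2 *\<^sub>R x) \<bullet> (2 *\<^sub>R x)) + 1 / (2 * sqrt (x \<bullet> x)) * (2 * real DIM('a))
       = (real DIM('a) - 1) / norm x"
      using n unfolding e(1) by (simp add: e(2) field_simps power2_eq_square)
  qed
qed

lemma C2d_normpowr: "C2d (-{0}) (\<lambda>x::'a::euclidean_space. norm x powr a) (\<lambda>x. (a * norm x powr (a - 2)) *\<^sub>R x)
   (\<lambda>x. a * (a + real DIM('a) - 2) * norm x powr (a - 2))"
proof -
  have d1: "((\<lambda>s. s powr a) has_real_derivative a * s powr (a - 1)) (at s)" if "s \<in> {0<..}" for s
    using has_real_derivative_powr[of s a] that by simp
  have d2: "((\<lambda>s. a * s powr (a - 1)) has_real_derivative a * ((a - 1) * s powr (a - 1 - 1))) (at s)" if "s \<in> {0<..}" for s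
    using has_real_derivative_powr[of s "a - 1"] that by (auto intro: DERIV_cmult)
  have c: "continuous_on {0<..} (\<lambda>s::real. a * ((a - 1) * s powr (a - 1 - 1)))"
    by (intro continuous_intros) auto
  have "C2d (-{0}) (\<lambda>x::'a. norm x powr a) (\<lambda>x. (a * norm x powr (a - 1)) *\<^sub>R ((1 / norm x) *\<^sub>R x))
     (\<lambda>x. a * ((a - 1) * norm x powr (a - 1 - 1)) * (((1 / norm x) *\<^sub>R x) \<bullet> ((1 / norm x) *\<^sub>R x)) + a * norm x powr (a - 1) * ((real DIM('a) - 1) / norm x))"
    by (rule C2d_compose[OF C2d_norm open_greaterThan _ d1 d2 c]) auto
  thus ?thesis
  proof (rule C2d_eq)
    fix x :: 'a assume "x \<in> -{0}"
    hence n: "norm x > 0" by simp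
    have xx: "x \<bullet> x = (norm x)^2" by (simp add: power2_norm_eq_inner)
    show "norm x powr a = norm x powr a" ..
    show "(a * norm x powr (a - 1)) *\<^sub>R ((1 / norm x) *\<^sub>R x) = (a * norm x powr (a - 2)) *\<^sub>R x"
      using n by (simp add: powr_m1)
    show "a * ((a - 1) * norm x powr (a - 1 - 1)) * (((1 / norm x) *\<^sub>R x) \<bullet> ((1 / norm x) *\<^sub>R x)) + a * norm x powr (a - 1) * ((real DIM('a) - 1) / norm x)
      = a * (a + real DIM('a) - 2) * norm x powr (a - 2)"
      using n by (simp add: powr_m1 xx field_simps power2_eq_square)
  qed
qed



lemma compose_plap:
  assumes t: "C2d S t Gt Tt" and M: "C1d S M GM" and Meq: "\<And>y. y \<in> S \<Longrightarrow> M y = Gt y \<bullet> Gt y"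
    and U: "open U" "\<And>x. x \<in> S \<Longrightarrow> t x \<in> U"
    and f: "\<And>s. s \<in> U \<Longrightarrow> (f has_real_derivative f1 s) (at s)"
       "\<And>s. s \<in> U \<Longrightarrow> (f1 has_real_derivative f2 s) (at s)" "continuous_on U f2"
    and ueq: "\<And>y. y \<in> S \<Longrightarrow> f (t y) = u y"
  shows "C2_on S u"
    "x \<in> S \<Longrightarrow> p_laplacian p u x = (f1 (t x))^2 * M x * (f2 (t x) * M x + f1 (t x) * Tt x)
        + (p - 2) / 2 * ((f1 (t x))^3 * (Gt x \<bullet> GM x) + 2 * (f1 (t x))^2 * f2 (t x) * (M x)^2)"
    "x \<in> S \<Longrightarrow> grad u x \<bullet> grad (\<lambda>y. (norm (grad u y))\<^sup>2) x
        = (f1 (t x))^3 * (Gt x \<bullet> GM x) + 2 * (f1 (t x))^2 * f2 (t x) * (M x)^2"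
proof -
  have u: "C2d S u (\<lambda>y. f1 (t y) *\<^sub>R Gt y) (\<lambda>y. f2 (t y) * (Gt y \<bullet> Gt y) + f1 (t y) * Tt y)"
    using C2d_compose[OF t U f] by (rule C2d_eq) (auto simp: ueq)
  show "C2_on S u" by (rule C2d_props(1)[OF u])
  have A: "C1d S (\<lambda>y. f1 (t y)) (\<lambda>y. f2 (t y) *\<^sub>R Gt y)"
    by (rule C1d_compose[OF C2d_C1d[OF t] U(2) f(2)])
  have N: "C1d S (\<lambda>y. f1 (t y) * f1 (t y) * M y)
     (\<lambda>y. (f1 (t y) * f1 (t y)) *\<^sub>R GM y + M y *\<^sub>R (f1 (t y) *\<^sub>R (f2 (t y) *\<^sub>R Gt y) + f1 (t y) *\<^sub>R (f2 (t y) *\<^sub>R Gt y)))"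
    by (rule C1d_mult[OF C1d_mult[OF A A] M])
  have Neq: "\<forall>y\<in>S. f1 (t y) * f1 (t y) * M y = (norm (f1 (t y) *\<^sub>R Gt y))\<^sup>2"
    using Meq by (simp only: power2_norm_eq_inner inner_scaleR_left inner_scaleR_right mult.assoc) simp
  assume x: "x \<in> S"
  note P = C2d_plap[OF u N Neq x]
  have mx: "Gt x \<bullet> Gt x = M x" using Meq[OF x] by simp
  have nn: "(norm (f1 (t x) *\<^sub>R Gt x))\<^sup>2 = (f1 (t x))^2 * M x"
    using Meq[OF x] by (simp only: power2_norm_eq_inner inner_scaleR_left inner_scaleR_right) (simp add: power2_eq_square)
  show "p_laplacian p u x = (f1 (t x))^2 * M x * (f2 (t x) * M x + f1 (t x) * Tt x)
        + (p - 2) / 2 * ((f1 (t x))^3 * (Gt x \<bullet> GM x) + 2 * (f1 (t x))^2 * f2 (t x) * (M x)^2)"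
    unfolding P(1) nn by (simp add:  inner_add_right mx algebra_simps power2_eq_square power3_eq_cube)
  show "grad u x \<bullet> grad (\<lambda>y. (norm (grad u y))\<^sup>2) x
        = (f1 (t x))^3 * (Gt x \<bullet> GM x) + 2 * (f1 (t x))^2 * f2 (t x) * (M x)^2"
    unfolding P(2) by (simp add: inner_add_right mx algebra_simps power2_eq_square power3_eq_cube)
qed



lemma pw1: "(r::real) > 0 \<Longrightarrow> r powr (- real m) = 1 / r ^ m"
  by (simp add: powr_minus powr_realpow divide_inverse)

lemma pw2: "(r::real) > 0 \<Longrightarrow> r powr (- real m - 2) = 1 / (r ^ m * r^2)"
  using powr_diff[of r "- real m" 2] by (simp add: pw1 powr_numeral)

lemma pw3: "(r::real) > 0 \<Longrightarrow> r powr (- 2) = 1 / r^2"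
  using pw1[of r 2] by simp

lemma pw4: "(r::real) > 0 \<Longrightarrow> m > 0 \<Longrightarrow> r ^ (2 * m - 2) = r ^ m * r ^ m / r^2"
proof -
  assume "r > 0" "m > 0"
  have e: "2 * m = (2 * m - 2) + 2" using \<open>m > 0\<close> by simp
  have "r ^ (2 * m - 2) * r ^ 2 = r ^ (2 * m)" by (subst (2) e) (simp only: power_add)
  hence "r ^ (2 * m - 2) * r ^ 2 = r ^ m * r ^ m" by (simp add: mult_2 power_add)
  thus ?thesis using \<open>r > 0\<close> by (simp add: field_simps)
qed

lemma t_C2d:
  fixes \<phi> :: "'a::euclidean_space \<Rightarrow> real"
  assumes phi: "C2d UNIV \<phi> P T\<phi>" "\<And>x. T\<phi> x = 0" "\<And>x. P x \<bullet> x = real m * \<phi> x"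
  shows "C2d (-{0}) (\<lambda>x. \<phi> x * norm x powr (- real m))
     (\<lambda>x. norm x powr (- real m) *\<^sub>R P x - (real m * \<phi> x * norm x powr (- real m - 2)) *\<^sub>R x)
     (\<lambda>x. - real m * (real DIM('a) + real m - 2) * \<phi> x * norm x powr (- real m - 2))"
proof -
  have "C2d (-{0}) (\<lambda>x. \<phi> x * norm x powr (- real m))
     (\<lambda>x. \<phi> x *\<^sub>R ((- real m * norm x powr (- real m - 2)) *\<^sub>R x) + norm x powr (- real m) *\<^sub>R P x)
     (\<lambda>x. \<phi> x * (- real m * (- real m + real DIM('a) - 2) * norm x powr (- real m - 2)) + norm x powr (- real m) * T\<phi> x
        + 2 * (P x \<bullet> ((- real m * norm x powr (- real m - 2)) *\<^sub>R x)))"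
    by (rule C2d_mult[OF C2d_mono[OF phi(1)] C2d_normpowr]) auto
  thus ?thesis
  proof (rule C2d_eq)
    fix x :: 'a
    show "\<phi> x * norm x powr - real m = \<phi> x * norm x powr - real m" ..
    show "\<phi> x *\<^sub>R ((- real m * norm x powr (- real m - 2)) *\<^sub>R x) + norm x powr (- real m) *\<^sub>R P x =
      norm x powr (- real m) *\<^sub>R P x - (real m * \<phi> x * norm x powr (- real m - 2)) *\<^sub>R x"
      by (simp add: algebra_simps)
    show "\<phi> x * (- real m * (- real m + real DIM('a) - 2) * norm x powr (- real m - 2)) + norm x powr (- real m) * T\<phi> x
        + 2 * (P x \<bullet> ((- real m * norm x powr (- real m - 2)) *\<^sub>R x)) =
       - real m * (real DIM('a) + real m - 2) * \<phi> x * norm x powr (- real m - 2)"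
      by (simp add: phi(2,3) algebra_simps)
  qed
qed

lemma t_facts:
  fixes \<phi> :: "'a::euclidean_space \<Rightarrow> real"
  assumes "P \<bullet> P = (real m)\<^sup>2 * norm x ^ (2 * m - 2)" "P \<bullet> x = real m * \<phi> x" "x \<noteq> 0" "m > 0"
  defines "G \<equiv> norm x powr (- real m) *\<^sub>R P - (real m * \<phi> x * norm x powr (- real m - 2)) *\<^sub>R x"
  shows "G \<bullet> x = 0" "G \<bullet> G = (real m)\<^sup>2 * (1 - (\<phi> x * norm x powr (- real m))\<^sup>2) * norm x powr (-2)"
    "\<phi> x * norm x powr (- real m - 2) = (\<phi> x * norm x powr (- real m)) * norm x powr (-2)"
proof -
  have r: "norm x > 0" using assms by simp
  have xx: "x \<bullet> x = (norm x)^2" by (simp add: power2_norm_eq_inner)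
  have a: "norm x ^ m > 0" using r by simp
  have PP: "P \<bullet> P = (real m)\<^sup>2 * (norm x ^ m * norm x ^ m / (norm x)^2)"
    using assms(1) pw4[OF r assms(4)] by simp
  show "G \<bullet> x = 0" unfolding G_def using r a
    by (simp add: inner_diff_left assms(2) xx pw1 pw2 field_simps power2_eq_square)
  show "G \<bullet> G = (real m)\<^sup>2 * (1 - (\<phi> x * norm x powr (- real m))\<^sup>2) * norm x powr (-2)"
    unfolding G_def using r a
    by (simp add: inner_diff_left inner_diff_right inner_commute PP assms(2) xx pw1 pw2 pw3 field_simps power2_eq_square)
  show "\<phi> x * norm x powr (- real m - 2) = (\<phi> x * norm x powr (- real m)) * norm x powr (-2)"
    using r a by (simp add: pw1 pw2 pw3)
qed



lemma M_C1d:
  fixes t :: "'a::euclidean_space \<Rightarrow> real"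
  assumes "C2d (-{0}) t Gt Tt"
  shows "C1d (-{0}) (\<lambda>x. (real m)\<^sup>2 * (1 - (t x)\<^sup>2) * norm x powr (-2))
    (\<lambda>x. ((real m)\<^sup>2 * (1 - (t x)\<^sup>2)) *\<^sub>R ((-2 * norm x powr (-2 - 2)) *\<^sub>R x) + norm x powr (-2) *\<^sub>R ((- 2 * (real m)\<^sup>2 * t x) *\<^sub>R Gt x))"
proof -
  have d: "((\<lambda>s. (real m)\<^sup>2 * (1 - s\<^sup>2)) has_real_derivative (- 2 * (real m)\<^sup>2 * s)) (at s)" if "s \<in> UNIV" for s
    by (auto intro!: derivative_eq_intros)
  have n: "C2d (-{0}) (\<lambda>x::'a. norm x powr (-2)) (\<lambda>x. (-2 * norm x powr (-2 - 2)) *\<^sub>R x)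
     (\<lambda>x. -2 * (-2 + real DIM('a) - 2) * norm x powr (-2 - 2))"
    using C2d_normpowr[of "-2"] by simp
  show ?thesis
    by (rule C1d_mult[OF C1d_compose[OF C2d_C1d[OF assms] _ d] C2d_C1d[OF n]]) auto
qed

lemma artanh_d1: "s \<in> {-1<..<1} \<Longrightarrow> (artanh has_real_derivative 1 / (1 - s\<^sup>2)) (at s)"
  by (rule artanh_real_has_field_derivative) auto

lemma artanh_d2: "s \<in> {-1<..<1} \<Longrightarrow> ((\<lambda>s::real. 1 / (1 - s\<^sup>2)) has_real_derivative 2 * s / (1 - s\<^sup>2)\<^sup>2) (at s)"
proof -
  assume "s \<in> {-1<..<1}"
  hence "1 - s\<^sup>2 \<noteq> 0" by (auto simp: power2_eq_1_iff)
  thus ?thesis by (auto intro!: derivative_eq_intros simp: field_simps power2_eq_square)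
qed

lemma arcsin_d1: "s \<in> {-1<..<1} \<Longrightarrow> (arcsin has_real_derivative 1 / sqrt (1 - s\<^sup>2)) (at s)"
  using DERIV_arcsin[of s] by (simp add: divide_inverse)

lemma pos1: "(s::real) \<in> {-1<..<1} \<Longrightarrow> 1 - s\<^sup>2 > 0"
  by (simp add: abs_square_less_1 abs_less_iff)

lemma arcsin_d2: "s \<in> {-1<..<1} \<Longrightarrow> ((\<lambda>s::real. 1 / sqrt (1 - s\<^sup>2)) has_real_derivative s / ((1 - s\<^sup>2) * sqrt (1 - s\<^sup>2))) (at s)"
proof -
  assume "s \<in> {-1<..<1}"
  hence p: "1 - s\<^sup>2 > 0" by (rule pos1)
  thus ?thesis by (auto intro!: derivative_eq_intros simp: field_simps power2_eq_square)
qed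

lemma g_d1: "s \<in> {-1<..<1} \<Longrightarrow> ((\<lambda>s::real. s / sqrt (1 - s\<^sup>2)) has_real_derivative 1 / ((1 - s\<^sup>2) * sqrt (1 - s\<^sup>2))) (at s)"
proof -
  assume "s \<in> {-1<..<1}"
  hence p: "1 - s\<^sup>2 > 0" by (rule pos1)
  thus ?thesis by (auto intro!: derivative_eq_intros simp: field_simps power2_eq_square)
qed

lemma pw32: "(d::real) > 0 \<Longrightarrow> d powr (-3/2) = 1 / (d * sqrt d)"
proof -
  assume d: "d > 0"
  have "d powr (3/2) = d powr (1 + 1/2)" by simp
  also have "\<dots> = d * sqrt d" using d by (simp only: powr_add powr_half_sqrt) simp
  finally have e: "d powr (3/2) = d * sqrt d" .
  have "d powr (-3/2) = inverse (d powr (3/2))" using powr_minus[of d "3/2"] by simp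
  also have "\<dots> = 1 / (d * sqrt d)" unfolding e by (rule inverse_eq_divide)
  finally show ?thesis .
qed

lemma g_d2: "s \<in> {-1<..<1} \<Longrightarrow> ((\<lambda>s::real. 1 / ((1 - s\<^sup>2) * sqrt (1 - s\<^sup>2))) has_real_derivative 3 * s * (1 - s\<^sup>2) powr (-5/2)) (at s)"
proof -
  assume s: "s \<in> {-1<..<1}"
  hence p: "1 - s\<^sup>2 > 0" by (rule pos1)
  have D: "((\<lambda>s::real. (1 - s\<^sup>2) powr (-3/2)) has_real_derivative 3 * s * (1 - s\<^sup>2) powr (-5/2)) (at s)"
    using p by (auto intro!: derivative_eq_intros simp: field_simps)
  show ?thesis
  proof (rule has_field_derivative_transform_within_open[OF D open_greaterThanLessThan s])
    fix x :: real assume "x \<in> {-1<..<1}"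
    hence "1 - x\<^sup>2 > 0" by (rule pos1)
    thus "(1 - x\<^sup>2) powr (-3/2) = 1 / ((1 - x\<^sup>2) * sqrt (1 - x\<^sup>2))" by (rule pw32)
  qed
qed

lemma conts: "continuous_on {-1<..<1} (\<lambda>s::real. 2 * s / (1 - s\<^sup>2)\<^sup>2)"
  "continuous_on {-1<..<1} (\<lambda>s::real. s / ((1 - s\<^sup>2) * sqrt (1 - s\<^sup>2)))"
  "continuous_on {-1<..<1} (\<lambda>s::real. 3 * s * (1 - s\<^sup>2) powr (-5/2))"
  by (intro continuous_intros; auto dest: pos1)+

lemma alg:
  fixes t \<rho> mm m1 A B c d p M Tt Q :: real
  assumes Bd: "B * d = c * t * A"
  and M_def: "M = mm\<^sup>2 * d * \<rho>"
  and Tt_def: "Tt = - mm * ((mm * m1 + 2) + mm - 2) * t * \<rho>"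
  and Q_def: "Q = \<rho> * (-2 * mm\<^sup>2 * t * M)"
  shows "A^2 * M * (B * M + A * Tt) + (p - 2) / 2 * (A^3 * Q + 2 * A^2 * B * M^2)
      = A^3 * M * mm\<^sup>2 * t * \<rho> * ((c - m1 - 1) + (p - 2) * (c - 1))"
    "A^3 * Q + 2 * A^2 * B * M^2 = A^3 * M * mm\<^sup>2 * t * \<rho> * (2 * (c - 1))"
proof -
  have BM: "B * M = c * t * A * mm\<^sup>2 * \<rho>"
  proof -
    have "B * M = mm\<^sup>2 * \<rho> * (B * d)" unfolding M_def by (simp add: algebra_simps)
    thus ?thesis using Bd by (simp add: algebra_simps)
  qed
  have AT: "A * Tt = - A * mm\<^sup>2 * (m1 + 1) * t * \<rho>" unfolding Tt_def by (simp add: algebra_simps power2_eq_square)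
  have e1: "B * M + A * Tt = A * mm\<^sup>2 * t * \<rho> * (c - m1 - 1)" unfolding BM AT by (simp add: algebra_simps)
  have e2: "A^3 * Q + 2 * A^2 * B * M^2 = A^3 * M * mm\<^sup>2 * t * \<rho> * (2 * (c - 1))"
  proof -
    have "A^3 * Q + 2 * A^2 * B * M^2 = A^2 * M * (A * \<rho> * (-2 * mm\<^sup>2 * t) + 2 * (B * M))"
      unfolding Q_def by (simp add: algebra_simps power2_eq_square power3_eq_cube)
    also have "\<dots> = A^3 * M * mm\<^sup>2 * t * \<rho> * (2 * (c - 1))" unfolding BM
      by (simp add: algebra_simps power2_eq_square power3_eq_cube)
    finally show ?thesis .
  qed
  show "A^3 * Q + 2 * A^2 * B * M^2 = A^3 * M * mm\<^sup>2 * t * \<rho> * (2 * (c - 1))" by (rule e2)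
  show "A^2 * M * (B * M + A * Tt) + (p - 2) / 2 * (A^3 * Q + 2 * A^2 * B * M^2)
      = A^3 * M * mm\<^sup>2 * t * \<rho> * ((c - m1 - 1) + (p - 2) * (c - 1))"
    unfolding e1 e2 by (simp add: field_simps power2_eq_square power3_eq_cube)
qed



lemma C2d_der: "C2d S f G T \<Longrightarrow> x \<in> S \<Longrightarrow> (f has_derivative (\<lambda>h. G x \<bullet> h)) (at x)"
  unfolding C2d_def by blast

lemma compose_plap':
  assumes t: "C2d S t Gt Tt" and M: "C1d S M GM" and Meq: "\<forall>y\<in>S. M y = Gt y \<bullet> Gt y"
    and U: "open U" "\<forall>x\<in>S. t x \<in> U"
    and f: "\<forall>s\<in>U. (f has_real_derivative f1 s) (at s)"
       "\<forall>s\<in>U. (f1 has_real_derivative f2 s) (at s)" "continuous_on U f2"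
    and ueq: "\<forall>y\<in>S. f (t y) = u y"
  shows "C2_on S u"
    "x \<in> S \<Longrightarrow> p_laplacian p u x = (f1 (t x))^2 * M x * (f2 (t x) * M x + f1 (t x) * Tt x)
        + (p - 2) / 2 * ((f1 (t x))^3 * (Gt x \<bullet> GM x) + 2 * (f1 (t x))^2 * f2 (t x) * (M x)^2)"
    "x \<in> S \<Longrightarrow> grad u x \<bullet> grad (\<lambda>y. (norm (grad u y))\<^sup>2) x
        = (f1 (t x))^3 * (Gt x \<bullet> GM x) + 2 * (f1 (t x))^2 * f2 (t x) * (M x)^2"
proof -
  note C = compose_plap[of S t Gt Tt M GM U f f1 f2 u, OF t M _ U(1) _ _ _ f(3)]
  show "C2_on S u" by (rule C(1)) (use Meq U f ueq in auto)
  show "x \<in> S \<Longrightarrow> p_laplacian p u x = (f1 (t x))^2 * M x * (f2 (t x) * M x + f1 (t x) * Tt x)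
        + (p - 2) / 2 * ((f1 (t x))^3 * (Gt x \<bullet> GM x) + 2 * (f1 (t x))^2 * f2 (t x) * (M x)^2)"
    by (rule C(2)) (use Meq U f ueq in auto)
  show "x \<in> S \<Longrightarrow> grad u x \<bullet> grad (\<lambda>y. (norm (grad u y))\<^sup>2) x
        = (f1 (t x))^3 * (Gt x \<bullet> GM x) + 2 * (f1 (t x))^2 * f2 (t x) * (M x)^2"
    by (rule C(3)) (use Meq U f ueq in auto)
qed

lemma part123:
  fixes m m1 :: nat and \<phi> :: "real^'n \<Rightarrow> real"
  assumes "m > 0" and "m1 > 0"
    and "CARD('n) = m * m1 + 2"
    and "homogeneous_poly m \<phi>"
    and "\<And>x. (norm (grad \<phi> x))\<^sup>2 = (real m)\<^sup>2 * norm x ^ (2 * m - 2)"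
    and "\<And>x. laplacian \<phi> x = 0"
  defines "S \<equiv> {x::real^'n. x \<noteq> 0 \<and> \<bar>\<phi> x\<bar> < norm x ^ m}"
  shows "p_harmonic_on (1 + real m1) S (\<lambda>x. artanh (\<phi> x / norm x ^ m))
       \<and> p_harmonic_on (1 + real m1 / 2) S (\<lambda>x. \<phi> x / sqrt (norm x ^ (2 * m) - (\<phi> x)\<^sup>2))
       \<and> inf_harmonic_on S (\<lambda>x. arcsin (\<phi> x / norm x ^ m))"
proof -
  obtain P T\<phi> where phi: "C2d UNIV \<phi> P T\<phi>" using homog_C2[OF assms(4)] unfolding C2_def by blast
  have gP: "grad \<phi> x = P x" for x using C2d_props(2)[OF phi] by simp
  have T0: "T\<phi> x = 0" for x using C2d_props(3)[OF phi, of x] assms(6) by simp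
  have PP: "P x \<bullet> P x = (real m)\<^sup>2 * norm x ^ (2 * m - 2)" for x
    using assms(5)[of x] unfolding gP by (simp add: power2_norm_eq_inner)
  have Px: "P x \<bullet> x = real m * \<phi> x" for x
    by (rule euler[OF assms(4) C2d_der[OF phi]]) simp
  define t where "t = (\<lambda>x::real^'n. \<phi> x * norm x powr (- real m))"
  define Gt where "Gt = (\<lambda>x::real^'n. norm x powr (- real m) *\<^sub>R P x - (real m * \<phi> x * norm x powr (- real m - 2)) *\<^sub>R x)"
  define Tt where "Tt = (\<lambda>x::real^'n. - real m * (real DIM(real^'n) + real m - 2) * \<phi> x * norm x powr (- real m - 2))"
  have tC: "C2d (-{0}) t Gt Tt" unfolding t_def Gt_def Tt_def by (rule t_C2d[OF phi T0 Px])
  define M where "M = (\<lambda>x::real^'n. (real m)\<^sup>2 * (1 - (t x)\<^sup>2) * norm x powr (-2))"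
  define GM where "GM = (\<lambda>x::real^'n. ((real m)\<^sup>2 * (1 - (t x)\<^sup>2)) *\<^sub>R ((-2 * norm x powr (-2 - 2)) *\<^sub>R x) + norm x powr (-2) *\<^sub>R ((- 2 * (real m)\<^sup>2 * t x) *\<^sub>R Gt x))"
  have MC: "C1d (-{0}) M GM" unfolding M_def GM_def by (rule M_C1d[OF tC])
  have cphi: "continuous_on UNIV \<phi>" by (rule C2d_cont(1)[OF phi])
  have oS: "open S" unfolding S_def
    by (intro open_Collect_conj open_Collect_neq open_Collect_less continuous_intros cphi)
  have sub: "S \<subseteq> -{0}" unfolding S_def by auto
  have tS: "C2d S t Gt Tt" by (rule C2d_mono[OF tC oS sub])
  have MS: "C1d S M GM" by (rule C1d_mono[OF MC oS sub])
  have x0: "y \<noteq> 0" if "y \<in> S" for y using that unfolding S_def by auto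
  have tf: "Gt y \<bullet> y = 0" "Gt y \<bullet> Gt y = M y"
     "\<phi> y * norm y powr (- real m - 2) = t y * norm y powr (-2)" if "y \<in> S" for y
    using t_facts[where P="P y" and x=y and \<phi>=\<phi> and m=m, OF PP[of y] Px[of y] x0[OF that] assms(1)] unfolding Gt_def M_def t_def by auto
  have Meq: "M y = Gt y \<bullet> Gt y" if "y \<in> S" for y using tf(2)[OF that] by simp
  have tdiv: "t y = \<phi> y / norm y ^ m" for y
  proof (cases "y = 0")
    case True thus ?thesis unfolding t_def using assms(1) by simp
  next
    case False thus ?thesis unfolding t_def by (simp add: pw1 divide_inverse)
  qed
  have tU: "t y \<in> {-1<..<1}" if "y \<in> S" for y
  proof -
    have a: "norm y ^ m > 0" using x0[OF that] by simp
    have b: "\<bar>\<phi> y\<bar> < norm y ^ m" using that unfolding S_def by auto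
    have "\<bar>t y\<bar> = \<bar>\<phi> y\<bar> / norm y ^ m" unfolding tdiv abs_divide by simp
    also have "\<dots> < 1" using a b by (simp only: pos_divide_less_eq mult_1)
    finally have "\<bar>t y\<bar> < 1" .
    thus ?thesis by auto
  qed
  have dim: "real DIM(real^'n) = real m * real m1 + 2" using assms(3) by simp
  have vals: "Tt y = - real m * ((real m * real m1 + 2) + real m - 2) * t y * norm y powr (-2)"
    "Gt y \<bullet> GM y = norm y powr (-2) * (-2 * (real m)\<^sup>2 * t y * M y)"
    "M y = (real m)\<^sup>2 * (1 - (t y)\<^sup>2) * norm y powr (-2)" if "y \<in> S" for y
  proof -
    show "Tt y = - real m * ((real m * real m1 + 2) + real m - 2) * t y * norm y powr (-2)"
      unfolding Tt_def dim using tf(3)[OF that] by simp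
    show "Gt y \<bullet> GM y = norm y powr (-2) * (-2 * (real m)\<^sup>2 * t y * M y)"
      unfolding GM_def inner_add_right inner_scaleR_right tf(1,2)[OF that] by simp
    show "M y = (real m)\<^sup>2 * (1 - (t y)\<^sup>2) * norm y powr (-2)" unfolding M_def ..
  qed
  have d1: "1 - (t y)\<^sup>2 > 0" if "y \<in> S" for y using pos1[OF tU[OF that]] .
  have MeqA: "\<forall>y\<in>S. M y = Gt y \<bullet> Gt y" using Meq by blast
  have tUA: "\<forall>y\<in>S. t y \<in> {-1<..<1}" using tU by blast
  have artanh_d1A: "\<forall>s\<in>{-1<..<1}. (artanh has_real_derivative 1 / (1 - s\<^sup>2)) (at s)" using artanh_d1 by blast
  have artanh_d2A: "\<forall>s\<in>{-1<..<1}. ((\<lambda>s::real. 1 / (1 - s\<^sup>2)) has_real_derivative 2 * s / (1 - s\<^sup>2)\<^sup>2) (at s)" using artanh_d2 by blast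
  have arcsin_d1A: "\<forall>s\<in>{-1<..<1}. (arcsin has_real_derivative 1 / sqrt (1 - s\<^sup>2)) (at s)" using arcsin_d1 by blast
  have arcsin_d2A: "\<forall>s\<in>{-1<..<1}. ((\<lambda>s::real. 1 / sqrt (1 - s\<^sup>2)) has_real_derivative s / ((1 - s\<^sup>2) * sqrt (1 - s\<^sup>2))) (at s)" using arcsin_d2 by blast
  have g_d1A: "\<forall>s\<in>{-1<..<1}. ((\<lambda>s::real. s / sqrt (1 - s\<^sup>2)) has_real_derivative 1 / ((1 - s\<^sup>2) * sqrt (1 - s\<^sup>2))) (at s)" using g_d1 by blast
  have g_d2A: "\<forall>s\<in>{-1<..<1}. ((\<lambda>s::real. 1 / ((1 - s\<^sup>2) * sqrt (1 - s\<^sup>2))) has_real_derivative 3 * s * (1 - s\<^sup>2) powr (-5/2)) (at s)" using g_d2 by blast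
  have part1: "p_harmonic_on (1 + real m1) S (\<lambda>x. artanh (\<phi> x / norm x ^ m))"
  proof -
    have ue: "\<forall>y\<in>S. artanh (t y) = artanh (\<phi> y / norm y ^ m)" by (simp add: tdiv)
    note CP = compose_plap'[OF tS MS MeqA open_greaterThanLessThan tUA artanh_d1A artanh_d2A conts(1) ue]
    have z: "p_laplacian (1 + real m1) (\<lambda>x. artanh (\<phi> x / norm x ^ m)) x = 0" if x: "x \<in> S" for x
    proof -
      have Bd: "2 * t x / (1 - (t x)\<^sup>2)\<^sup>2 * (1 - (t x)\<^sup>2) = 2 * t x * (1 / (1 - (t x)\<^sup>2))"
        using d1[OF x] by (simp add: power2_eq_square)
      show ?thesis
        unfolding CP(2)[OF x] alg(1)[OF Bd vals(3)[OF x] vals(1)[OF x] vals(2)[OF x]]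
        by simp
    qed
    show ?thesis unfolding p_harmonic_on_def using oS CP(1) z by blast
  qed
  have part2: "p_harmonic_on (1 + real m1 / 2) S (\<lambda>x. \<phi> x / sqrt (norm x ^ (2 * m) - (\<phi> x)\<^sup>2))"
  proof -
    have ueq: "t y / sqrt (1 - (t y)\<^sup>2) = \<phi> y / sqrt (norm y ^ (2 * m) - (\<phi> y)\<^sup>2)" if y: "y \<in> S" for y
    proof -
      have a: "norm y ^ m > 0" using x0[OF y] by simp
      have "norm y ^ (2 * m) - (\<phi> y)\<^sup>2 = (norm y ^ m)\<^sup>2 * (1 - (t y)\<^sup>2)"
        unfolding tdiv using a x0[OF y] assms(1) by (simp add: field_simps power2_eq_square power_mult mult.commute[of 2 m])
      hence "sqrt (norm y ^ (2 * m) - (\<phi> y)\<^sup>2) = norm y ^ m * sqrt (1 - (t y)\<^sup>2)"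
        using a by (simp add: real_sqrt_mult)
      thus ?thesis unfolding tdiv using a x0[OF y] assms(1) by simp
    qed
    have ue: "\<forall>y\<in>S. t y / sqrt (1 - (t y)\<^sup>2) = \<phi> y / sqrt (norm y ^ (2 * m) - (\<phi> y)\<^sup>2)" using ueq by blast
    note CP = compose_plap'[OF tS MS MeqA open_greaterThanLessThan tUA g_d1A g_d2A conts(3) ue]
    have z: "p_laplacian (1 + real m1 / 2) (\<lambda>x. \<phi> x / sqrt (norm x ^ (2 * m) - (\<phi> x)\<^sup>2)) x = 0" if x: "x \<in> S" for x
    proof -
      have Bd: "3 * t x * (1 - (t x)\<^sup>2) powr (-5/2) * (1 - (t x)\<^sup>2) = 3 * t x * (1 / ((1 - (t x)\<^sup>2) * sqrt (1 - (t x)\<^sup>2)))"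
      proof -
        have "(1 - (t x)\<^sup>2) powr (-5/2) * (1 - (t x)\<^sup>2) = (1 - (t x)\<^sup>2) powr (-3/2)"
          using d1[OF x] powr_add[of "1 - (t x)\<^sup>2" "-5/2" 1] by simp
        thus ?thesis using pw32[OF d1[OF x]] by (simp add: mult.assoc)
      qed
      show ?thesis
        unfolding CP(2)[OF x] alg(1)[OF Bd vals(3)[OF x] vals(1)[OF x] vals(2)[OF x]]
        by simp
    qed
    show ?thesis unfolding p_harmonic_on_def using oS CP(1) z by blast
  qed
  have part3: "inf_harmonic_on S (\<lambda>x. arcsin (\<phi> x / norm x ^ m))"
  proof -
    have ue: "\<forall>y\<in>S. arcsin (t y) = arcsin (\<phi> y / norm y ^ m)" by (simp add: tdiv)
    note CP = compose_plap'[OF tS MS MeqA open_greaterThanLessThan tUA arcsin_d1A arcsin_d2A conts(2) ue]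
    have z: "grad (\<lambda>x. arcsin (\<phi> x / norm x ^ m)) x \<bullet> grad (\<lambda>y. (norm (grad (\<lambda>x. arcsin (\<phi> x / norm x ^ m)) y))\<^sup>2) x = 0"
      if x: "x \<in> S" for x
    proof -
      have Bd: "t x / ((1 - (t x)\<^sup>2) * sqrt (1 - (t x)\<^sup>2)) * (1 - (t x)\<^sup>2) = 1 * t x * (1 / sqrt (1 - (t x)\<^sup>2))"
        using d1[OF x] by simp
      show ?thesis
        unfolding CP(3)[OF x] alg(2)[OF Bd vals(3)[OF x] vals(1)[OF x] vals(2)[OF x]]
        by simp
    qed
    show ?thesis unfolding inf_harmonic_on_def using oS CP(1) z by blast
  qed
  show ?thesis using part1 part2 part3 by blast
qed



lemma sum_Basis_prod_real:
  fixes g :: "'a::euclidean_space \<times> 'b::euclidean_space \<Rightarrow> real"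
  shows "(\<Sum>i\<in>Basis. g i) = (\<Sum>u\<in>Basis. g (u, 0)) + (\<Sum>v\<in>Basis. g (0, v))"
proof -
  have inj: "inj_on (\<lambda>u. (u::'a, 0::'b)) Basis" "inj_on (\<lambda>u. (0::'a, u::'b)) Basis"
    by (auto intro!: inj_onI)
  have disj: "(\<lambda>u. (u::'a, 0::'b)) ` Basis \<inter> (\<lambda>u. (0::'a, u::'b)) ` Basis = {}"
    by (auto simp: nonzero_Basis)
  show ?thesis
    by (simp add: Basis_prod_def sum.union_disjoint disj sum.reindex inj)
qed

lemma ip1: "(a, 0) \<bullet> h = a \<bullet> fst h" "(0, b) \<bullet> h = b \<bullet> snd h"
  by (cases h; simp)+

lemma C2d_fst: "C2d UNIV (\<lambda>z::('a::euclidean_space \<times> 'b::euclidean_space). fst z \<bullet> fst z) (\<lambda>z. 2 *\<^sub>R (fst z, 0)) (\<lambda>z. 2 * real DIM('a))"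
  unfolding C2d_def
proof (intro conjI exI[of _ "\<lambda>z h. 2 *\<^sub>R (fst h, 0)"] ballI)
  fix z :: "'a \<times> 'b"
  show "((\<lambda>z. fst z \<bullet> fst z) has_derivative (\<lambda>h. (2 *\<^sub>R (fst z, 0)) \<bullet> h)) (at z)"
    by (auto intro!: derivative_eq_intros simp: ip1 inner_commute)
  show "((\<lambda>z. 2 *\<^sub>R (fst z, 0)) has_derivative (\<lambda>h. 2 *\<^sub>R (fst h, 0))) (at z)"
    by (auto intro!: derivative_eq_intros)
  show "2 * real DIM('a) = (\<Sum>i\<in>(Basis::('a \<times> 'b) set). (2 *\<^sub>R (fst i, 0)) \<bullet> i)"
    by (simp add: sum_Basis_prod_real)
qed auto

lemma C2d_snd: "C2d UNIV (\<lambda>z::('a::euclidean_space \<times> 'b::euclidean_space). snd z \<bullet> snd z) (\<lambda>z. 2 *\<^sub>R (0, snd z)) (\<lambda>z. 2 * real DIM('b))"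
  unfolding C2d_def
proof (intro conjI exI[of _ "\<lambda>z h. 2 *\<^sub>R (0, snd h)"] ballI)
  fix z :: "'a \<times> 'b"
  show "((\<lambda>z. snd z \<bullet> snd z) has_derivative (\<lambda>h. (2 *\<^sub>R (0, snd z)) \<bullet> h)) (at z)"
    by (auto intro!: derivative_eq_intros simp: ip1 inner_commute)
  show "((\<lambda>z. 2 *\<^sub>R (0, snd z)) has_derivative (\<lambda>h. 2 *\<^sub>R (0, snd h))) (at z)"
    by (auto intro!: derivative_eq_intros)
  show "2 * real DIM('b) = (\<Sum>i\<in>(Basis::('a \<times> 'b) set). (2 *\<^sub>R (0, snd i)) \<bullet> i)"
    by (simp add: sum_Basis_prod_real)
qed auto

lemma part4:
  fixes S :: "('a::euclidean_space \<times> 'a) set"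
  defines "S \<equiv> {z. fst z \<noteq> 0 \<and> snd z \<noteq> 0}"
  shows "p_harmonic_on (real DIM('a)) S (\<lambda>z. ln (norm (fst z) / norm (snd z)))"
proof -
  define q1 where "q1 = (\<lambda>z::'a\<times>'a. fst z \<bullet> fst z)"
  define q2 where "q2 = (\<lambda>z::'a\<times>'a. snd z \<bullet> snd z)"
  have oS: "open S" unfolding S_def
    by (intro open_Collect_conj open_Collect_neq continuous_intros)
  have q1p: "q1 z > 0" "q2 z > 0" if "z \<in> S" for z using that unfolding S_def q1_def q2_def by auto
  have Q1: "C2d S q1 (\<lambda>z. 2 *\<^sub>R (fst z, 0)) (\<lambda>z. 2 * real DIM('a))"
    unfolding q1_def by (rule C2d_mono[OF C2d_fst oS]) auto
  have Q2: "C2d S q2 (\<lambda>z. 2 *\<^sub>R (0, snd z)) (\<lambda>z. 2 * real DIM('a))"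
    unfolding q2_def by (rule C2d_mono[OF C2d_snd oS]) auto
  have dl1: "(ln has_real_derivative 1 / s) (at s)" if "s \<in> {0<..}" for s :: real
    using DERIV_ln[of s] that by (simp add: divide_inverse)
  have dl2: "((\<lambda>s::real. 1 / s) has_real_derivative - 1 / s\<^sup>2) (at s)" if "s \<in> {0<..}" for s :: real
    using that by (auto intro!: derivative_eq_intros simp: field_simps power2_eq_square)
  have cl: "continuous_on {0<..} (\<lambda>s::real. - 1 / s\<^sup>2)" by (intro continuous_intros) auto
  have L1: "C2d S (\<lambda>z. ln (q1 z)) (\<lambda>z. (1 / q1 z) *\<^sub>R (2 *\<^sub>R (fst z, 0)))
      (\<lambda>z. - 1 / (q1 z)\<^sup>2 * ((2 *\<^sub>R (fst z, 0)) \<bullet> (2 *\<^sub>R (fst z, 0))) + 1 / q1 z * (2 * real DIM('a)))"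
    using C2d_compose[OF Q1 open_greaterThan _ dl1 dl2 cl] q1p by simp
  have L2: "C2d S (\<lambda>z. ln (q2 z)) (\<lambda>z. (1 / q2 z) *\<^sub>R (2 *\<^sub>R (0, snd z)))
      (\<lambda>z. - 1 / (q2 z)\<^sup>2 * ((2 *\<^sub>R (0, snd z)) \<bullet> (2 *\<^sub>R (0, snd z))) + 1 / q2 z * (2 * real DIM('a)))"
    using C2d_compose[OF Q2 open_greaterThan _ dl1 dl2 cl] q1p by simp
  define Gu where "Gu = (\<lambda>z::'a\<times>'a. ((1 / q1 z) *\<^sub>R fst z, - (1 / q2 z) *\<^sub>R snd z))"
  define Tu where "Tu = (\<lambda>z::'a\<times>'a. (real DIM('a) - 2) * (1 / q1 z - 1 / q2 z))"
  have n: "norm (fst z) = sqrt (q1 z)" "norm (snd z) = sqrt (q2 z)" for z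
    unfolding q1_def q2_def by (simp_all add: norm_eq_sqrt_inner)
  have i1: "(2 *\<^sub>R (fst z, 0)) \<bullet> (2 *\<^sub>R (fst z, 0)) = 4 * q1 z" for z :: "'a \<times> 'a" unfolding q1_def by simp
  have i2: "(2 *\<^sub>R (0, snd z)) \<bullet> (2 *\<^sub>R (0, snd z)) = 4 * q2 z" for z :: "'a \<times> 'a" unfolding q2_def by simp
  have U: "C2d S (\<lambda>z. ln (norm (fst z) / norm (snd z))) Gu Tu"
    apply (rule C2d_eq[OF C2d_add[OF C2d_mult[OF C2d_const[OF oS, of "1/2"] L1] C2d_mult[OF C2d_const[OF oS, of "-1/2"] L2]]])
    subgoal for z using q1p[of z] unfolding n by (simp add: ln_div ln_sqrt)
    subgoal for z unfolding Gu_def by simp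
    subgoal for z using q1p[of z] unfolding Tu_def i1 i2 by (simp add: field_simps power2_eq_square)
    done
  have dN: "((\<lambda>s::real. 1 / s) has_real_derivative - 1 / s\<^sup>2) (at s)" if "s \<in> {0<..}" for s :: real
    by (rule dl2[OF that])
  have N: "C1d S (\<lambda>z. 1 / q1 z + 1 / q2 z)
     (\<lambda>z. (- 1 / (q1 z)\<^sup>2) *\<^sub>R (2 *\<^sub>R (fst z, 0)) + (- 1 / (q2 z)\<^sup>2) *\<^sub>R (2 *\<^sub>R (0, snd z)))"
  proof (rule C1d_add)
    show "C1d S (\<lambda>z. 1 / q1 z) (\<lambda>z. (- 1 / (q1 z)\<^sup>2) *\<^sub>R (2 *\<^sub>R (fst z, 0)))"
      apply (rule C1d_compose[OF C2d_C1d[OF Q1], of "{0<..}" "\<lambda>s. 1 / s" "\<lambda>s. - 1 / s\<^sup>2"])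
      using q1p apply simp
      using dl2 apply blast
      done
    show "C1d S (\<lambda>z. 1 / q2 z) (\<lambda>z. (- 1 / (q2 z)\<^sup>2) *\<^sub>R (2 *\<^sub>R (0, snd z)))"
      apply (rule C1d_compose[OF C2d_C1d[OF Q2], of "{0<..}" "\<lambda>s. 1 / s" "\<lambda>s. - 1 / s\<^sup>2"])
      using q1p apply simp
      using dl2 apply blast
      done
  qed
  have Neq: "\<forall>y\<in>S. 1 / q1 y + 1 / q2 y = (norm (Gu y))\<^sup>2"
  proof
    fix y assume y: "y \<in> S"
    have p: "q1 y > 0" "q2 y > 0" using q1p[OF y] by auto
    show "1 / q1 y + 1 / q2 y = (norm (Gu y))\<^sup>2"
      unfolding power2_norm_eq_inner Gu_def using p
      by (simp add: q1_def[symmetric] q2_def[symmetric]) (simp add: q1_def q2_def field_simps power2_eq_square)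
  qed
  have z: "p_laplacian (real DIM('a)) (\<lambda>z. ln (norm (fst z) / norm (snd z))) x = 0" if x: "x \<in> S" for x
  proof -
    have p: "q1 x > 0" "q2 x > 0" using q1p[OF x] by auto
    have nG: "(norm (Gu x))\<^sup>2 = 1 / q1 x + 1 / q2 x" using Neq x by simp
    have GG: "Gu x \<bullet> ((- 1 / (q1 x)\<^sup>2) *\<^sub>R (2 *\<^sub>R (fst x, 0)) + (- 1 / (q2 x)\<^sup>2) *\<^sub>R (2 *\<^sub>R (0, snd x)))
       = - 2 / (q1 x)\<^sup>2 + 2 / (q2 x)\<^sup>2"
      unfolding Gu_def using p by (simp add: q1_def[symmetric] q2_def[symmetric]) (simp add: q1_def q2_def field_simps power2_eq_square)
    show ?thesis unfolding C2d_plap(1)[OF U N Neq x] nG GG Tu_def using p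
      by (simp add: field_simps power2_eq_square)
  qed
  show ?thesis unfolding p_harmonic_on_def using oS C2d_props(1)[OF U] z by blast
qed


theorem mainTheorem5:
  fixes m m1 :: nat and \<phi> :: "real^'n \<Rightarrow> real"
  assumes "m > 0" and "m1 > 0"
    and "CARD('n) = m * m1 + 2"
    and "homogeneous_poly m \<phi>"
    and "\<And>x. (norm (grad \<phi> x))\<^sup>2 = (real m)\<^sup>2 * norm x ^ (2 * m - 2)"
    and "\<And>x. laplacian \<phi> x = 0"
  defines "S \<equiv> {x::real^'n. x \<noteq> 0 \<and> \<bar>\<phi> x\<bar> < norm x ^ m}"
  shows "p_harmonic_on (1 + real m1) S (\<lambda>x. artanh (\<phi> x / norm x ^ m))
       \<and> p_harmonic_on (1 + real m1 / 2) S (\<lambda>x. \<phi> x / sqrt (norm x ^ (2 * m) - (\<phi> x)\<^sup>2))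
       \<and> inf_harmonic_on S (\<lambda>x. arcsin (\<phi> x / norm x ^ m))
       \<and> p_harmonic_on (real CARD('k)) {z :: (real^'k) \<times> (real^'k). fst z \<noteq> 0 \<and> snd z \<noteq> 0}
           (\<lambda>z. ln (norm (fst z) / norm (snd z)))"
proof -
  have a: "p_harmonic_on (1 + real m1) S (\<lambda>x. artanh (\<phi> x / norm x ^ m))
       \<and> p_harmonic_on (1 + real m1 / 2) S (\<lambda>x. \<phi> x / sqrt (norm x ^ (2 * m) - (\<phi> x)\<^sup>2))
       \<and> inf_harmonic_on S (\<lambda>x. arcsin (\<phi> x / norm x ^ m))"
    unfolding S_def by (rule part123[OF assms(1-6)])
  have b: "p_harmonic_on (real DIM(real^'k)) {z :: (real^'k) \<times> (real^'k). fst z \<noteq> 0 \<and> snd z \<noteq> 0}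
           (\<lambda>z. ln (norm (fst z) / norm (snd z)))"
    by (rule part4)
  show ?thesis using a b by simp
qed

end
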